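(* Let $E$ be a finite graph and let $R$ be a unital commutative ring of characteristic $0$. If $\alpha_1,\dots,\alpha_n\in E^*$ satisfy $\sum_{i=1}^n\alpha_i\alpha_i^*=1$ in $L_R(E)$, then $\alpha_i^*\alpha_j=0$ for all $i\ne j$.
   Context: A graph $E=(E^0,E^1,r,s)$ has vertices $E^0$, edges $E^1$, and range and source maps $r,s$; finite means $E^0,E^1$ finite. A path is a word $e_1\cdots e_n$ with $r(e_i)=s(e_{i+1})$; vertices are paths of length $0$; $E^*$ is the set of finite paths. The Leavitt path algebra $L_R(E)$ is the universal $R$-algebra generated by pairwise orthogonal idempotents $\{v\}_{v\in E^0}$ and $\{e,e^*\}_{e\in E^1}$ with: $e^*f=0$ for $e\ne f$; $e^*e=r(e)$; $s(e)e=e=er(e)$; $e^*s(e)=e^*=r(e)e^*$; and $v=\sum_{e\in s^{-1}(v)}ee^*$ whenever $s^{-1}(v)$ is finite and nonempty. For $\alpha=e_1\cdots e_n$, $\alpha$ denotes the product $e_1\cdots e_n$ and $\alpha^*=e_n^*\cdots e_1^*$. For finite $E$, $L_R(E)$ is unital with $1=\sum_{v\in E^0}v$. *)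

theory Defs
  imports Main "Graph_Theory.Digraph"
begin

text \<open>Graphs: a pre_digraph G with verts G = E^0, arcs G = E^1,
  tail G = s (source), head G = r (range).  Finite graph = fin_digraph G.\<close>

datatype ('v,'e) lgen = V 'v | Ed 'e | Gh 'e

datatype ('v,'e,'r) lterm =
    Gen "('v,'e) lgen"
  | Zero
  | Add "('v,'e,'r) lterm" "('v,'e,'r) lterm"
  | Neg "('v,'e,'r) lterm"
  | Mul "('v,'e,'r) lterm" "('v,'e,'r) lterm"
  | Smul 'r "('v,'e,'r) lterm"

fun tsum :: "('v,'e,'r) lterm list \<Rightarrow> ('v,'e,'r) lterm" where
  "tsum [] = Zero"
| "tsum (x # xs) = Add x (tsum xs)"

text \<open>Equality in the Leavitt path algebra L_R(G): the least congruence on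
  expressions making the quotient an associative R-algebra and satisfying the
  Leavitt relations (the presentation of the universal algebra).  Generators
  not belonging to the graph are identified with 0.\<close>
inductive leq :: "('v,'e) pre_digraph \<Rightarrow> ('v,'e,'r::comm_ring_1) lterm \<Rightarrow> ('v,'e,'r) lterm \<Rightarrow> bool"
  for G where
  refl: "leq G x x"
| sym: "leq G x y \<Longrightarrow> leq G y x"
| trans: "leq G x y \<Longrightarrow> leq G y z \<Longrightarrow> leq G x z"
| cong_add: "leq G x x' \<Longrightarrow> leq G y y' \<Longrightarrow> leq G (Add x y) (Add x' y')"
| cong_neg: "leq G x x' \<Longrightarrow> leq G (Neg x) (Neg x')"
| cong_mul: "leq G x x' \<Longrightarrow> leq G y y' \<Longrightarrow> leq G (Mul x y) (Mul x' y')"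
| cong_smul: "leq G x x' \<Longrightarrow> leq G (Smul a x) (Smul a x')"
| add_assoc: "leq G (Add (Add x y) z) (Add x (Add y z))"
| add_comm: "leq G (Add x y) (Add y x)"
| add_zero: "leq G (Add Zero x) x"
| add_neg: "leq G (Add (Neg x) x) Zero"
| mul_assoc: "leq G (Mul (Mul x y) z) (Mul x (Mul y z))"
| distr_l: "leq G (Mul x (Add y z)) (Add (Mul x y) (Mul x z))"
| distr_r: "leq G (Mul (Add x y) z) (Add (Mul x z) (Mul y z))"
| smul_add: "leq G (Smul a (Add x y)) (Add (Smul a x) (Smul a y))"
| smul_sadd: "leq G (Smul (a + b) x) (Add (Smul a x) (Smul b x))"
| smul_mult: "leq G (Smul (a * b) x) (Smul a (Smul b x))"
| smul_one: "leq G (Smul 1 x) x"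
| smul_mul_l: "leq G (Smul a (Mul x y)) (Mul (Smul a x) y)"
| smul_mul_r: "leq G (Smul a (Mul x y)) (Mul x (Smul a y))"
| junk_v: "v \<notin> verts G \<Longrightarrow> leq G (Gen (V v)) Zero"
| junk_e: "e \<notin> arcs G \<Longrightarrow> leq G (Gen (Ed e)) Zero"
| junk_g: "e \<notin> arcs G \<Longrightarrow> leq G (Gen (Gh e)) Zero"
| v_idem: "v \<in> verts G \<Longrightarrow> leq G (Mul (Gen (V v)) (Gen (V v))) (Gen (V v))"
| v_orth: "v \<in> verts G \<Longrightarrow> w \<in> verts G \<Longrightarrow> v \<noteq> w \<Longrightarrow>
           leq G (Mul (Gen (V v)) (Gen (V w))) Zero"
| ghost_orth: "e \<in> arcs G \<Longrightarrow> f \<in> arcs G \<Longrightarrow> e \<noteq> f \<Longrightarrow>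
           leq G (Mul (Gen (Gh e)) (Gen (Ed f))) Zero"
| ghost_edge: "e \<in> arcs G \<Longrightarrow> leq G (Mul (Gen (Gh e)) (Gen (Ed e))) (Gen (V (head G e)))"
| src_edge: "e \<in> arcs G \<Longrightarrow> leq G (Mul (Gen (V (tail G e))) (Gen (Ed e))) (Gen (Ed e))"
| edge_rng: "e \<in> arcs G \<Longrightarrow> leq G (Mul (Gen (Ed e)) (Gen (V (head G e)))) (Gen (Ed e))"
| ghost_src: "e \<in> arcs G \<Longrightarrow> leq G (Mul (Gen (Gh e)) (Gen (V (tail G e)))) (Gen (Gh e))"
| rng_ghost: "e \<in> arcs G \<Longrightarrow> leq G (Mul (Gen (V (head G e))) (Gen (Gh e))) (Gen (Gh e))"
| ck2: "v \<in> verts G \<Longrightarrow> finite {e \<in> arcs G. tail G e = v} \<Longrightarrow> {e \<in> arcs G. tail G e = v} \<noteq> {} \<Longrightarrow>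
        set es = {e \<in> arcs G. tail G e = v} \<Longrightarrow> distinct es \<Longrightarrow>
        leq G (Gen (V v)) (tsum (map (\<lambda>e. Mul (Gen (Ed e)) (Gen (Gh e))) es))"

text \<open>Finite paths: a pair (v, es); if es = [] it is the vertex v (length 0 path),
  otherwise the edge word es, with v its source.\<close>
definition is_path :: "('v,'e) pre_digraph \<Rightarrow> 'v \<times> 'e list \<Rightarrow> bool" where
  "is_path G p \<longleftrightarrow> fst p \<in> verts G \<and> set (snd p) \<subseteq> arcs G \<and>
     (snd p \<noteq> [] \<longrightarrow> tail G (hd (snd p)) = fst p) \<and>
     (\<forall>i. Suc i < length (snd p) \<longrightarrow> head G (snd p ! i) = tail G (snd p ! Suc i))"

fun edges_tm :: "'e list \<Rightarrow> ('v,'e,'r) lterm" where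
  "edges_tm [] = Zero"
| "edges_tm [e] = Gen (Ed e)"
| "edges_tm (e # es) = Mul (Gen (Ed e)) (edges_tm es)"

fun ghosts_tm :: "'e list \<Rightarrow> ('v,'e,'r) lterm" where
  "ghosts_tm [] = Zero"
| "ghosts_tm [e] = Gen (Gh e)"
| "ghosts_tm (e # es) = Mul (ghosts_tm es) (Gen (Gh e))"

definition path_tm :: "'v \<times> 'e list \<Rightarrow> ('v,'e,'r) lterm" where
  "path_tm p = (if snd p = [] then Gen (V (fst p)) else edges_tm (snd p))"

definition ghost_tm :: "'v \<times> 'e list \<Rightarrow> ('v,'e,'r) lterm" where
  "ghost_tm p = (if snd p = [] then Gen (V (fst p)) else ghosts_tm (snd p))"

text \<open>The unit of L_R(G) for finite G: the sum of all vertices.\<close>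
definition one_tm :: "('v,'e) pre_digraph \<Rightarrow> ('v,'e,'r) lterm" where
  "one_tm G = tsum (map (\<lambda>v. Gen (V v)) (SOME vs. set vs = verts G \<and> distinct vs))"

end

theory Submission
  imports Defs
begin


lemmas leq_trans[trans] = leq.trans

lemma leq_mul_zero_r: "leq G (Mul x Zero) Zero"
proof -
  let ?y = "Mul x Zero"
  have 1: "leq G ?y (Add ?y ?y)"
  proof -
    have "leq G ?y (Mul x (Add Zero Zero))" by (intro leq.cong_mul leq.refl leq.sym[OF leq.add_zero])
    also have "leq G \<dots> (Add ?y ?y)" by (rule leq.distr_l)
    finally show ?thesis .
  qed
  have "leq G Zero (Add (Neg ?y) ?y)" by (rule leq.sym[OF leq.add_neg])
  also have "leq G \<dots> (Add (Neg ?y) (Add ?y ?y))" by (intro leq.cong_add leq.refl 1)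
  also have "leq G \<dots> (Add (Add (Neg ?y) ?y) ?y)" by (rule leq.sym[OF leq.add_assoc])
  also have "leq G \<dots> (Add Zero ?y)" by (intro leq.cong_add leq.refl leq.add_neg)
  also have "leq G \<dots> ?y" by (rule leq.add_zero)
  finally show ?thesis by (rule leq.sym)
qed

lemma leq_mul_zero_l: "leq G (Mul Zero x) Zero"
proof -
  let ?y = "Mul Zero x"
  have 1: "leq G ?y (Add ?y ?y)"
  proof -
    have "leq G ?y (Mul (Add Zero Zero) x)" by (intro leq.cong_mul leq.refl leq.sym[OF leq.add_zero])
    also have "leq G \<dots> (Add ?y ?y)" by (rule leq.distr_r)
    finally show ?thesis .
  qed
  have "leq G Zero (Add (Neg ?y) ?y)" by (rule leq.sym[OF leq.add_neg])
  also have "leq G \<dots> (Add (Neg ?y) (Add ?y ?y))" by (intro leq.cong_add leq.refl 1)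
  also have "leq G \<dots> (Add (Add (Neg ?y) ?y) ?y)" by (rule leq.sym[OF leq.add_assoc])
  also have "leq G \<dots> (Add Zero ?y)" by (intro leq.cong_add leq.refl leq.add_neg)
  also have "leq G \<dots> ?y" by (rule leq.add_zero)
  finally show ?thesis by (rule leq.sym)
qed

lemma mul_zero_r': "leq G y Zero \<Longrightarrow> leq G (Mul x y) Zero"
  by (meson leq.cong_mul leq.refl leq.trans leq_mul_zero_r)
lemma mul_zero_l': "leq G y Zero \<Longrightarrow> leq G (Mul y x) Zero"
  by (meson leq.cong_mul leq.refl leq.trans leq_mul_zero_l)

lemma ghosts_cons_mul: "leq G (Mul (ghosts_tm (e#es)) Y)
   (if es = [] then Mul (Gen (Gh e)) Y else Mul (ghosts_tm es) (Mul (Gen (Gh e)) Y))"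
  by (cases es) (auto intro: leq.refl leq.mul_assoc)

lemma edges_cons_mul: "leq G (Mul Y (edges_tm (f#fs)))
   (if fs = [] then Mul Y (Gen (Ed f)) else Mul (Mul Y (Gen (Ed f))) (edges_tm fs))"
  by (cases fs) (auto intro: leq.refl leq.sym[OF leq.mul_assoc])

definition epath :: "('v,'e) pre_digraph \<Rightarrow> 'e list \<Rightarrow> bool" where
  "epath G fs \<longleftrightarrow> (\<forall>i. Suc i < length fs \<longrightarrow> head G (fs ! i) = tail G (fs ! Suc i))"

lemma epath_Cons: "epath G (f # fs) \<longleftrightarrow> epath G fs \<and> (fs \<noteq> [] \<longrightarrow> head G f = tail G (hd fs))"
  unfolding epath_def
  apply (cases fs)
   apply simp
  by (auto simp: nth_Cons split: nat.splits)

lemma v_edges: "fs \<noteq> [] \<Longrightarrow> hd fs \<in> arcs G \<Longrightarrow>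
   leq G (Mul (Gen (V (tail G (hd fs)))) (edges_tm fs)) (edges_tm fs)"
proof (cases fs)
  case (Cons f fs')
  assume a: "hd fs \<in> arcs G"
  show ?thesis
  proof (cases fs')
    case Nil thus ?thesis using Cons a by (simp add: leq.src_edge)
  next
    case (Cons g gs)
    have "leq G (Mul (Gen (V (tail G f))) (Mul (Gen (Ed f)) (edges_tm fs')))
       (Mul (Mul (Gen (V (tail G f))) (Gen (Ed f))) (edges_tm fs'))" by (rule leq.sym[OF leq.mul_assoc])
    also have "leq G \<dots> (Mul (Gen (Ed f)) (edges_tm fs'))"
      using a \<open>fs = f # fs'\<close> by (intro leq.cong_mul leq.refl leq.src_edge) simp
    finally show ?thesis using \<open>fs = f # fs'\<close> Cons by simp
  qed
qed simp

lemma gh_edges: "e \<in> arcs G \<Longrightarrow> f \<in> arcs G \<Longrightarrow> epath G (f#fs) \<Longrightarrow> set fs \<subseteq> arcs G \<Longrightarrow>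
  leq G (Mul (Gen (Gh e)) (edges_tm (f#fs)))
    (if e \<noteq> f then Zero else if fs = [] then Gen (V (head G e)) else edges_tm fs)"
proof -
  assume a: "e \<in> arcs G" "f \<in> arcs G" "epath G (f#fs)" "set fs \<subseteq> arcs G"
  have s: "leq G (Mul (Gen (Gh e)) (edges_tm (f#fs)))
   (if fs = [] then Mul (Gen (Gh e)) (Gen (Ed f)) else Mul (Mul (Gen (Gh e)) (Gen (Ed f))) (edges_tm fs))"
    by (rule edges_cons_mul)
  show ?thesis
  proof (cases "e = f")
    case False
    have z: "leq G (Mul (Gen (Gh e)) (Gen (Ed f))) Zero" using a False by (intro leq.ghost_orth)
    show ?thesis using s False z
      by (cases "fs = []") (auto intro: leq.trans mul_zero_l')
  next
    case True
    have z: "leq G (Mul (Gen (Gh e)) (Gen (Ed f))) (Gen (V (head G e)))" using a True by (simp add: leq.ghost_edge)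
    show ?thesis
    proof (cases "fs = []")
      case True thus ?thesis using s z \<open>e = f\<close> by (auto intro: leq.trans)
    next
      case False
      have h: "head G e = tail G (hd fs)" using a(3) False True by (simp add: epath_Cons)
      have "hd fs \<in> arcs G" using False a(4) by auto
      hence v: "leq G (Mul (Gen (V (head G e))) (edges_tm fs)) (edges_tm fs)" using h v_edges False by metis
      have "leq G (Mul (Mul (Gen (Gh e)) (Gen (Ed f))) (edges_tm fs)) (Mul (Gen (V (head G e))) (edges_tm fs))"
        by (intro leq.cong_mul z leq.refl)
      thus ?thesis using s v False True by (auto intro: leq.trans)
    qed
  qed
qed

definition pfx :: "'a list \<Rightarrow> 'a list \<Rightarrow> bool" where
  "pfx xs ys \<longleftrightarrow> (\<exists>zs. ys = xs @ zs)"

lemma pfx_Cons: "pfx (x#xs) (y#ys) \<longleftrightarrow> x = y \<and> pfx xs ys"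
  unfolding pfx_def by auto

lemma gh_ed_zero: "set es \<subseteq> arcs G \<Longrightarrow> set fs \<subseteq> arcs G \<Longrightarrow> epath G fs \<Longrightarrow> es \<noteq> [] \<Longrightarrow> fs \<noteq> [] \<Longrightarrow>
   \<not> pfx es fs \<Longrightarrow> \<not> pfx fs es \<Longrightarrow> leq G (Mul (ghosts_tm es) (edges_tm fs)) (Zero :: ('v,'e,'r::comm_ring_1) lterm)"
proof (induction es arbitrary: fs)
  case Nil thus ?case by simp
next
  case (Cons e es')
  obtain f fs' where fs: "fs = f # fs'" using Cons.prems(5) by (cases fs) auto
  have ef: "e \<in> arcs G" "f \<in> arcs G" "set fs' \<subseteq> arcs G" using Cons.prems fs by auto
  have g: "leq G (Mul (Gen (Gh e)) (edges_tm (f#fs')))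
    (if e \<noteq> f then Zero else if fs' = [] then Gen (V (head G e)) else edges_tm fs')"
    using gh_edges[OF ef(1,2), of fs'] Cons.prems(3) ef(3) fs by simp
  have s: "leq G (Mul (ghosts_tm (e#es')) (edges_tm fs))
   (if es' = [] then Mul (Gen (Gh e)) (edges_tm fs) else Mul (ghosts_tm es') (Mul (Gen (Gh e)) (edges_tm fs)))"
    by (rule ghosts_cons_mul)
  show ?case
  proof (cases "e = f")
    case False
    hence z: "leq G (Mul (Gen (Gh e)) (edges_tm fs)) Zero" using g fs by simp
    show ?thesis using s z by (cases "es' = []") (auto intro: leq.trans mul_zero_r')
  next
    case True
    have ne: "es' \<noteq> []" "fs' \<noteq> []" using Cons.prems(6,7) fs True by (auto simp: pfx_def)
    hence z: "leq G (Mul (Gen (Gh e)) (edges_tm fs)) (edges_tm fs')" using g fs True by simp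
    have ih: "leq G (Mul (ghosts_tm es') (edges_tm fs')) (Zero :: ('v,'e,'r) lterm)"
      using Cons.IH[of fs'] Cons.prems fs True ne by (auto simp: pfx_Cons epath_Cons)
    have "leq G (Mul (ghosts_tm es') (Mul (Gen (Gh e)) (edges_tm fs))) (Mul (ghosts_tm es') (edges_tm fs'))"
      by (intro leq.cong_mul leq.refl z)
    thus ?thesis using s ne ih by (auto intro: leq.trans)
  qed
qed

definition pcomp :: "'v \<times> 'e list \<Rightarrow> 'v \<times> 'e list \<Rightarrow> bool" where
  "pcomp a b \<longleftrightarrow> fst a = fst b \<and> (pfx (snd a) (snd b) \<or> pfx (snd b) (snd a))"

lemma is_path_epath: "is_path G a \<Longrightarrow> epath G (snd a)"
  unfolding is_path_def epath_def by auto

lemma incomp_zero: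
  fixes G :: "('v,'e) pre_digraph"
  assumes wf: "wf_digraph G" and pa: "is_path G a" and pb: "is_path G b" and nc: "\<not> pcomp a b"
  shows "leq G (Mul (ghost_tm a) (path_tm b)) (Zero :: ('v,'e,'r::comm_ring_1) lterm)"
proof -
  obtain v es where a: "a = (v, es)" by (cases a)
  obtain w fs where b: "b = (w, fs)" by (cases b)
  have pa': "v \<in> verts G" "set es \<subseteq> arcs G" "es \<noteq> [] \<Longrightarrow> tail G (hd es) = v" "epath G es"
    using pa is_path_epath[OF pa] a unfolding is_path_def by auto
  have pb': "w \<in> verts G" "set fs \<subseteq> arcs G" "fs \<noteq> [] \<Longrightarrow> tail G (hd fs) = w" "epath G fs"
    using pb is_path_epath[OF pb] b unfolding is_path_def by auto
  show ?thesis
  proof (cases "es = []")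
    case es: True
    show ?thesis
    proof (cases "fs = []")
      case True
      hence "v \<noteq> w" using nc es a b by (auto simp: pcomp_def pfx_def)
      thus ?thesis using es True a b pa'(1) pb'(1) by (simp add: ghost_tm_def path_tm_def leq.v_orth)
    next
      case False
      hence vw: "v \<noteq> w" using nc es a b by (auto simp: pcomp_def pfx_def)
      have hd: "hd fs \<in> arcs G" using False pb'(2) by auto
      have "leq G (Mul (Gen (V v)) (edges_tm fs)) (Mul (Gen (V v)) (Mul (Gen (V w)) (edges_tm fs)))"
        using v_edges[OF False hd] pb'(3)[OF False] by (intro leq.cong_mul leq.refl) (auto intro: leq.sym)
      also have "leq G \<dots> (Mul (Mul (Gen (V v)) (Gen (V w))) (edges_tm fs))" by (rule leq.sym[OF leq.mul_assoc])
      also have "leq G \<dots> (Zero :: ('v,'e,'r) lterm)" using vw pa'(1) pb'(1) by (intro mul_zero_l' leq.v_orth)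
      finally show ?thesis using es False a b by (simp add: ghost_tm_def path_tm_def)
    qed
  next
    case es: False
    then obtain e es' where ee: "es = e # es'" by (cases es) auto
    have earc: "e \<in> arcs G" using ee pa'(2) by auto
    show ?thesis
    proof (cases "fs = []")
      case True
      hence vw: "v \<noteq> w" using nc es a b by (auto simp: pcomp_def pfx_def)
      have te: "tail G e = v" using pa'(3) ee by auto
      have "leq G (Mul (Gen (Gh e)) (Gen (V w))) (Mul (Mul (Gen (Gh e)) (Gen (V (tail G e)))) (Gen (V w)))"
        using earc by (intro leq.cong_mul leq.refl leq.sym[OF leq.ghost_src])
      also have "leq G \<dots> (Mul (Gen (Gh e)) (Mul (Gen (V (tail G e))) (Gen (V w))))" by (rule leq.mul_assoc)
      also have "leq G \<dots> (Zero :: ('v,'e,'r) lterm)" using vw te pa'(1) pb'(1) by (intro mul_zero_r' leq.v_orth) auto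
      finally have z: "leq G (Mul (Gen (Gh e)) (Gen (V w))) (Zero :: ('v,'e,'r) lterm)" .
      have s: "leq G (Mul (ghosts_tm (e#es')) (Gen (V w)))
        (if es' = [] then Mul (Gen (Gh e)) (Gen (V w)) else Mul (ghosts_tm es') (Mul (Gen (Gh e)) (Gen (V w))))"
        by (rule ghosts_cons_mul)
      have "leq G (Mul (ghosts_tm (e#es')) (Gen (V w))) (Zero :: ('v,'e,'r) lterm)"
        using s z by (cases "es' = []") (auto intro: leq.trans mul_zero_r')
      thus ?thesis using ee True a b by (simp add: ghost_tm_def path_tm_def)
    next
      case False
      have "\<not> pfx es fs \<and> \<not> pfx fs es"
      proof (cases "v = w")
        case True thus ?thesis using nc a b by (auto simp: pcomp_def)
      next
        case vw: False
        obtain f fs' where ff: "fs = f # fs'" using False by (cases fs) auto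
        have "e \<noteq> f" using pa'(3) pb'(3) ee ff vw by auto
        thus ?thesis using ee ff by (auto simp: pfx_Cons)
      qed
      thus ?thesis using gh_ed_zero[OF pa'(2) pb'(2) pb'(4) es False] a b es False
        by (simp add: ghost_tm_def path_tm_def)
    qed
  qed
qed



type_synonym ('v,'e) pt = "'v \<times> (nat \<Rightarrow> 'e option)"

definition sinkv :: "('v,'e) pre_digraph \<Rightarrow> 'v \<Rightarrow> bool" where
  "sinkv G v \<longleftrightarrow> (\<forall>e\<in>arcs G. tail G e \<noteq> v)"

definition valid :: "('v,'e) pre_digraph \<Rightarrow> ('v,'e) pt \<Rightarrow> bool" where
  "valid G x \<longleftrightarrow> fst x \<in> verts G \<and> (snd x 0 = None \<longrightarrow> sinkv G (fst x))
     \<and> (\<forall>e. snd x 0 = Some e \<longrightarrow> tail G e = fst x)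
     \<and> (\<forall>n e. snd x n = Some e \<longrightarrow> e \<in> arcs G \<and> (snd x (Suc n) = None \<longrightarrow> sinkv G (head G e))
            \<and> (\<forall>e'. snd x (Suc n) = Some e' \<longrightarrow> tail G e' = head G e))"

definition pcons :: "'e \<Rightarrow> (nat \<Rightarrow> 'e option) \<Rightarrow> nat \<Rightarrow> 'e option" where
  "pcons e p = (\<lambda>n. case n of 0 \<Rightarrow> Some e | Suc m \<Rightarrow> p m)"

definition sh1 :: "(nat \<Rightarrow> 'e option) \<Rightarrow> nat \<Rightarrow> 'e option" where
  "sh1 p = (\<lambda>n. p (Suc n))"

lemma pcons_0[simp]: "pcons e p 0 = Some e" by (simp add: pcons_def)
lemma pcons_Suc[simp]: "pcons e p (Suc n) = p n" by (simp add: pcons_def)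

lemma sh1_pcons[simp]: "sh1 (pcons e p) = p"
  by (simp add: sh1_def pcons_def)

lemma pcons_sh1: "p 0 = Some e \<Longrightarrow> pcons e (sh1 p) = p"
  by (auto simp: sh1_def pcons_def fun_eq_iff split: nat.splits)

lemma valid_sh1:
  assumes wf: "wf_digraph G" and v: "valid G x" and x0: "snd x 0 = Some e"
  shows "valid G (head G e, sh1 (snd x))"
proof -
  obtain v p where x: "x = (v, p)" by (cases x)
  have A: "\<forall>n e. p n = Some e \<longrightarrow> e \<in> arcs G \<and> (p (Suc n) = None \<longrightarrow> sinkv G (head G e))
            \<and> (\<forall>e'. p (Suc n) = Some e' \<longrightarrow> tail G e' = head G e)"
    using v x unfolding valid_def by simp
  have p0: "p 0 = Some e" using x0 x by simp
  have e: "e \<in> arcs G" using A p0 by blast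
  have h: "head G e \<in> verts G" using wf_digraph.head_in_verts[OF wf e] .
  have c1: "p 1 = None \<longrightarrow> sinkv G (head G e)" using A p0 by simp
  have c2: "\<forall>e'. p 1 = Some e' \<longrightarrow> tail G e' = head G e" using A p0 by simp
  have c3: "\<forall>n e. p (Suc n) = Some e \<longrightarrow> e \<in> arcs G \<and> (p (Suc (Suc n)) = None \<longrightarrow> sinkv G (head G e))
            \<and> (\<forall>e'. p (Suc (Suc n)) = Some e' \<longrightarrow> tail G e' = head G e)" using A by blast
  show ?thesis unfolding valid_def sh1_def using h c1 c2 c3 x by simp
qed

lemma valid_pcons:
  assumes wf: "wf_digraph G" and v: "valid G (head G e, p)" and e: "e \<in> arcs G"
  shows "valid G (tail G e, pcons e p)"
proof -
  have A: "\<forall>n e. p n = Some e \<longrightarrow> e \<in> arcs G \<and> (p (Suc n) = None \<longrightarrow> sinkv G (head G e))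
            \<and> (\<forall>e'. p (Suc n) = Some e' \<longrightarrow> tail G e' = head G e)"
    using v unfolding valid_def by simp
  have B: "p 0 = None \<longrightarrow> sinkv G (head G e)" "\<forall>e'. p 0 = Some e' \<longrightarrow> tail G e' = head G e"
    using v unfolding valid_def by simp_all
  have t: "tail G e \<in> verts G" using wf_digraph.tail_in_verts[OF wf e] .
  have C: "\<forall>n e'. pcons e p n = Some e' \<longrightarrow> e' \<in> arcs G \<and> (pcons e p (Suc n) = None \<longrightarrow> sinkv G (head G e'))
            \<and> (\<forall>e''. pcons e p (Suc n) = Some e'' \<longrightarrow> tail G e'' = head G e')"
  proof (intro allI impI)
    fix n e' assume h: "pcons e p n = Some e'"
    show "e' \<in> arcs G \<and> (pcons e p (Suc n) = None \<longrightarrow> sinkv G (head G e'))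
            \<and> (\<forall>e''. pcons e p (Suc n) = Some e'' \<longrightarrow> tail G e'' = head G e')"
    proof (cases n)
      case 0 thus ?thesis using h e B by simp
    next
      case (Suc m) thus ?thesis using h A by simp
    qed
  qed
  show ?thesis unfolding valid_def using t C by simp
qed

fun gop :: "('v,'e) pre_digraph \<Rightarrow> ('v,'e) lgen \<Rightarrow> (('v,'e) pt \<Rightarrow> 'r::comm_ring_1) \<Rightarrow> ('v,'e) pt \<Rightarrow> 'r" where
  "gop G (V v) \<phi> x = (if v \<in> verts G \<and> valid G x \<and> fst x = v then \<phi> x else 0)"
| "gop G (Ed e) \<phi> x = (if e \<in> arcs G \<and> valid G x \<and> snd x 0 = Some e then \<phi> (head G e, sh1 (snd x)) else 0)"
| "gop G (Gh e) \<phi> x = (if e \<in> arcs G \<and> valid G x \<and> fst x = head G e then \<phi> (tail G e, pcons e (snd x)) else 0)"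

fun interp :: "('v,'e) pre_digraph \<Rightarrow> ('v,'e,'r::comm_ring_1) lterm \<Rightarrow> (('v,'e) pt \<Rightarrow> 'r) \<Rightarrow> ('v,'e) pt \<Rightarrow> 'r" where
  "interp G (Gen g) = gop G g"
| "interp G Zero = (\<lambda>\<phi> x. 0)"
| "interp G (Add s t) = (\<lambda>\<phi> x. interp G s \<phi> x + interp G t \<phi> x)"
| "interp G (Neg s) = (\<lambda>\<phi> x. - interp G s \<phi> x)"
| "interp G (Mul s t) = (\<lambda>\<phi>. interp G s (interp G t \<phi>))"
| "interp G (Smul a s) = (\<lambda>\<phi> x. a * interp G s \<phi> x)"

definition lin :: "((('v,'e) pt \<Rightarrow> 'r::comm_ring_1) \<Rightarrow> ('v,'e) pt \<Rightarrow> 'r) \<Rightarrow> bool" where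
  "lin T \<longleftrightarrow> (\<forall>\<phi> \<psi>. T (\<lambda>x. \<phi> x + \<psi> x) = (\<lambda>x. T \<phi> x + T \<psi> x)) \<and> (\<forall>a \<phi>. T (\<lambda>x. a * \<phi> x) = (\<lambda>x. a * T \<phi> x))"

lemma lin_gop: "lin (gop G g)"
  by (cases g) (auto simp: lin_def fun_eq_iff)

lemma lin_interp: "lin (interp G t)"
proof (induction t)
  case (Gen g) thus ?case by (simp add: lin_gop)
next
  case Zero thus ?case by (simp add: lin_def)
next
  case (Add s t) thus ?case by (simp add: lin_def algebra_simps)
next
  case (Neg s) thus ?case by (simp add: lin_def algebra_simps)
next
  case (Mul s t) thus ?case by (simp add: lin_def)
next
  case (Smul a s) thus ?case by (simp add: lin_def algebra_simps)
qed

lemma interp_add: "interp G t (\<lambda>x. \<phi> x + \<psi> x) = (\<lambda>x. interp G t \<phi> x + interp G t \<psi> x)"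
  using lin_interp[of G t] by (simp add: lin_def)
lemma interp_smul: "interp G t (\<lambda>x. a * \<phi> x) = (\<lambda>x. a * interp G t \<phi> x)"
  using lin_interp[of G t] by (simp add: lin_def)

lemma interp_tsum: "interp G (tsum ts) \<phi> x = sum_list (map (\<lambda>t. interp G t \<phi> x) ts)"
  by (induction ts) auto

lemma sound:
  fixes G :: "('v,'e) pre_digraph"
  assumes wf: "wf_digraph G"
  shows "leq G s (t :: ('v,'e,'r::comm_ring_1) lterm) \<Longrightarrow> interp G s = interp G t"
proof (induction rule: leq.induct)
  case (cong_mul x x' y y') thus ?case by simp
next
  case (distr_l x y z) thus ?case by (simp add: interp_add fun_eq_iff)
next
  case (smul_mul_r a x y) thus ?case by (simp add: interp_smul fun_eq_iff)
next
  case (add_assoc x y z) thus ?case by (simp add: algebra_simps)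
next
  case (add_comm x y) thus ?case by (simp add: algebra_simps)
next
  case (distr_r x y z) thus ?case by (simp add: fun_eq_iff)
next
  case (smul_add a x y) thus ?case by (simp add: algebra_simps)
next
  case (smul_sadd a b x) thus ?case by (simp add: algebra_simps)
next
  case (smul_mult a b x) thus ?case by (simp add: algebra_simps)
next
  case (ghost_orth e f) thus ?case by (auto simp: fun_eq_iff)
next
  case (ghost_edge e) thus ?case
    using valid_pcons[OF wf] wf_digraph.head_in_verts[OF wf]
    by (auto simp: fun_eq_iff)
next
  case (src_edge e) thus ?case by (auto simp: fun_eq_iff valid_def)
next
  case (edge_rng e) thus ?case
    using valid_sh1[OF wf] wf_digraph.head_in_verts[OF wf] by (auto simp: fun_eq_iff)
next
  case (ghost_src e) thus ?case
    using valid_pcons[OF wf] wf_digraph.tail_in_verts[OF wf] by (auto simp: fun_eq_iff)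
next
  case (rng_ghost e) thus ?case
    using wf_digraph.head_in_verts[OF wf] by (auto simp: fun_eq_iff)
next
  case (ck2 v es)
  show ?case
  proof (rule ext, rule ext)
    fix \<phi> :: "('v,'e) pt \<Rightarrow> 'r" and x :: "('v,'e) pt"
    obtain u p where x: "x = (u, p)" by (cases x)
    have trm: "interp G (Mul (Gen (Ed e)) (Gen (Gh e))) \<phi> x =
        (if e \<in> arcs G \<and> valid G x \<and> p 0 = Some e then \<phi> x else 0)" for e
    proof (cases "e \<in> arcs G \<and> valid G x \<and> p 0 = Some e")
      case True
      have v1: "valid G (head G e, sh1 p)" using valid_sh1[OF wf, of x e] True x by simp
      have te: "tail G e = u" using True x unfolding valid_def by simp
      have pc: "pcons e (sh1 p) = p" using pcons_sh1[of p e] True by simp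
      show ?thesis using True v1 te pc x by simp
    next
      case False thus ?thesis using x by auto
    qed
    have "interp G (tsum (map (\<lambda>e. Mul (Gen (Ed e)) (Gen (Gh e))) es)) \<phi> x
       = sum_list (map (\<lambda>e. interp G (Mul (Gen (Ed e)) (Gen (Gh e))) \<phi> x) es)"
      unfolding interp_tsum by (simp only: map_map o_def)
    also have "\<dots> = (\<Sum>e\<in>set es. interp G (Mul (Gen (Ed e)) (Gen (Gh e))) \<phi> x)"
      by (rule sum_list_distinct_conv_sum_set[OF ck2(5)])
    also have "\<dots> = (\<Sum>e\<in>set es. (if e \<in> arcs G \<and> valid G x \<and> p 0 = Some e then \<phi> x else 0))"
      by (rule sum.cong[OF HOL.refl], rule trm)
    also have "\<dots> = interp G (Gen (V v)) \<phi> x"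
    proof (cases "valid G x")
      case val: True
      show ?thesis
      proof (cases "p 0")
        case None
        hence "sinkv G u" using val x unfolding valid_def by simp
        hence "u \<noteq> v" using ck2(3) unfolding sinkv_def by auto
        thus ?thesis using None x by simp
      next
        case (Some e0)
        have e0: "e0 \<in> arcs G" "tail G e0 = u" using val Some x unfolding valid_def by auto
        have "(\<Sum>e\<in>set es. (if e \<in> arcs G \<and> valid G x \<and> p 0 = Some e then \<phi> x else 0))
           = (\<Sum>e\<in>set es. (if e = e0 then \<phi> x else 0))" using Some val e0 by (intro sum.cong) auto
        also have "\<dots> = (if e0 \<in> set es then \<phi> x else 0)" by (simp add: sum.delta')
        finally show ?thesis using e0 ck2(1,4) val x by auto
      qed
    next
      case False thus ?thesis by simp
    qed
    finally show "interp G (Gen (V v)) \<phi> x = interp G (tsum (map (\<lambda>e. Mul (Gen (Ed e)) (Gen (Gh e))) es)) \<phi> x"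
      by simp
  qed
qed (auto simp: fun_eq_iff algebra_simps)



primrec prep :: "'e list \<Rightarrow> (nat \<Rightarrow> 'e option) \<Rightarrow> nat \<Rightarrow> 'e option" where
  "prep [] p = p"
| "prep (e # es) p = pcons e (prep es p)"

definition shn :: "nat \<Rightarrow> (nat \<Rightarrow> 'e option) \<Rightarrow> nat \<Rightarrow> 'e option" where
  "shn k p = (\<lambda>n. p (n + k))"

lemma shn_0[simp]: "shn 0 p = p" by (simp add: shn_def)
lemma shn_Suc: "shn (Suc k) p = shn k (sh1 p)" by (simp add: shn_def sh1_def)
lemma shn_1: "shn (Suc 0) p = sh1 p" by (simp add: shn_def sh1_def)

lemma pcons_eq: "pcons e q = p \<longleftrightarrow> p 0 = Some e \<and> q = sh1 p"
  by (auto simp: fun_eq_iff sh1_def pcons_def split: nat.splits)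

lemma shn_prep[simp]: "shn (length es) (prep es p) = p"
  by (induction es) (auto simp: shn_Suc)

lemma prep_append: "prep (es @ fs) q = prep es (prep fs q)"
  by (induction es) auto

lemma valid_prep:
  assumes wf: "wf_digraph G"
  shows "es \<noteq> [] \<Longrightarrow> set es \<subseteq> arcs G \<Longrightarrow> epath G es \<Longrightarrow> valid G (head G (last es), p) \<Longrightarrow>
    valid G (tail G (hd es), prep es p)"
proof (induction es)
  case Nil thus ?case by simp
next
  case (Cons e es')
  show ?case
  proof (cases "es' = []")
    case True thus ?thesis using Cons.prems valid_pcons[OF wf, of e p] by simp
  next
    case False
    have "valid G (tail G (hd es'), prep es' p)" using Cons False by (simp add: epath_Cons)
    moreover have "head G e = tail G (hd es')" using Cons.prems(3) False by (simp add: epath_Cons)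
    ultimately show ?thesis using valid_pcons[OF wf, of e "prep es' p"] Cons.prems(2) by simp
  qed
qed

lemma valid_shn:
  assumes wf: "wf_digraph G"
  shows "es \<noteq> [] \<Longrightarrow> valid G x \<Longrightarrow> prep es (shn (length es) (snd x)) = snd x \<Longrightarrow>
    valid G (head G (last es), shn (length es) (snd x))"
proof (induction es arbitrary: x)
  case Nil thus ?case by simp
next
  case (Cons e es')
  have p: "snd x 0 = Some e" "prep es' (shn (length es') (sh1 (snd x))) = sh1 (snd x)"
    using Cons.prems(3) by (simp_all add: pcons_eq shn_Suc)
  have v: "valid G (head G e, sh1 (snd x))" using valid_sh1[OF wf Cons.prems(2) p(1)] .
  show ?case
  proof (cases "es' = []")
    case True thus ?thesis using v by (simp add: shn_1)
  next
    case False
    have "valid G (head G (last es'), shn (length es') (sh1 (snd x)))"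
      using Cons.IH[OF False v] p(2) by simp
    thus ?thesis using False by (simp add: shn_Suc)
  qed
qed

lemma interp_edges:
  assumes wf: "wf_digraph G"
  shows "es \<noteq> [] \<Longrightarrow> interp G (edges_tm es) \<phi> x =
    (if valid G x \<and> set es \<subseteq> arcs G \<and> prep es (shn (length es) (snd x)) = snd x
     then \<phi> (head G (last es), shn (length es) (snd x)) else 0)"
proof (induction es arbitrary: x \<phi> rule: edges_tm.induct)
  case 1 thus ?case by simp
next
  case (2 e) thus ?case by (auto simp: shn_1 pcons_eq)
next
  case (3 e e' es)
  obtain u p where x: "x = (u, p)" by (cases x)
  show ?case
  proof (cases "e \<in> arcs G \<and> valid G x \<and> p 0 = Some e")
    case True
    have v: "valid G (head G e, sh1 p)" using valid_sh1[OF wf, of x e] True x by simp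
    show ?thesis using True v x 3(1)[where x="(head G e, sh1 p)"] by (simp add: pcons_eq shn_Suc)
  next
    case False thus ?thesis using x by (auto simp: pcons_eq shn_Suc)
  qed
qed

lemma interp_ghosts:
  fixes G :: "('v,'e) pre_digraph" and \<phi> :: "('v,'e) pt \<Rightarrow> 'r::comm_ring_1"
  assumes wf: "wf_digraph G"
  shows "es \<noteq> [] \<Longrightarrow> set es \<subseteq> arcs G \<Longrightarrow> epath G es \<Longrightarrow> interp G (ghosts_tm es) \<phi> y =
    (if valid G y \<and> fst y = head G (last es) then \<phi> (tail G (hd es), prep es (snd y)) else 0)"
proof (induction es arbitrary: y \<phi> rule: ghosts_tm.induct)
  case 1 thus ?case by simp
next
  case (2 e) thus ?case by auto
next
  case (3 e e' es)
  obtain u p where y: "y = (u, p)" by (cases y)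
  have ep: "epath G (e' # es)" "head G e = tail G e'" using 3(4) by (simp_all add: epath_Cons)
  have IH: "interp G (ghosts_tm (e' # es)) \<psi> y =
    (if valid G y \<and> fst y = head G (last (e' # es)) then \<psi> (tail G e', prep (e' # es) (snd y)) else 0)" for \<psi> :: "('v,'e) pt \<Rightarrow> 'r"
    using 3(1)[where y=y and \<phi>=\<psi>] 3(3) ep by simp
  show ?case
  proof (cases "valid G y \<and> u = head G (last (e' # es))")
    case True
    have "valid G (tail G (hd (e'#es)), prep (e'#es) p)"
      using valid_prep[OF wf, of "e'#es" p] True y 3(3) ep by auto
    thus ?thesis using True y IH 3(3) ep by simp
  next
    case False thus ?thesis using y IH by auto
  qed
qed

definition Z :: "('v,'e) pre_digraph \<Rightarrow> 'v \<times> 'e list \<Rightarrow> ('v,'e) pt \<Rightarrow> bool" where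
  "Z G a x \<longleftrightarrow> valid G x \<and> fst x = fst a \<and> prep (snd a) (shn (length (snd a)) (snd x)) = snd x"

lemma interp_proj:
  fixes G :: "('v,'e) pre_digraph"
  assumes wf: "wf_digraph G" and pa: "is_path G a"
  shows "interp G (Mul (path_tm a) (ghost_tm a) :: ('v,'e,'r::comm_ring_1) lterm) \<phi> x = (if Z G a x then \<phi> x else 0)"
proof -
  obtain v es where a: "a = (v, es)" by (cases a)
  have pa': "v \<in> verts G" "set es \<subseteq> arcs G" "es \<noteq> [] \<Longrightarrow> tail G (hd es) = v" "epath G es"
    using pa is_path_epath[OF pa] a unfolding is_path_def by auto
  show ?thesis
  proof (cases "es = []")
    case True thus ?thesis using a pa' by (auto simp: path_tm_def ghost_tm_def Z_def)
  next
    case False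
    obtain u p where x: "x = (u, p)" by (cases x)
    have gh: "interp G (ghosts_tm es) \<phi> y =
      (if valid G y \<and> fst y = head G (last es) then \<phi> (tail G (hd es), prep es (snd y)) else 0)" for y
      using interp_ghosts[OF wf False pa'(2,4)] .
    show ?thesis
    proof (cases "valid G x \<and> prep es (shn (length es) p) = p")
      case True
      have vs: "valid G (head G (last es), shn (length es) p)" using valid_shn[OF wf False, of x] True x by simp
      have p0: "p 0 = Some (hd es)" using True False by (cases es) (auto simp: pcons_eq)
      have "tail G (hd es) = u" using True p0 x unfolding valid_def by simp
      hence "u = v" using pa'(3)[OF False] by simp
      thus ?thesis using True vs x a False pa'(2) gh[of "(head G (last es), shn (length es) p)"]
        by (simp add: path_tm_def ghost_tm_def Z_def interp_edges[OF wf False] pa'(3)[OF False])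
    next
      case False2: False
      thus ?thesis using x a False pa'(2)
        by (auto simp: path_tm_def ghost_tm_def Z_def interp_edges[OF wf False])
    qed
  qed
qed

definition chs :: "('v,'e) pre_digraph \<Rightarrow> 'v \<Rightarrow> 'e option" where
  "chs G v = (if \<exists>e\<in>arcs G. tail G e = v then Some (SOME e. e \<in> arcs G \<and> tail G e = v) else None)"

primrec walk :: "('v,'e) pre_digraph \<Rightarrow> 'v \<Rightarrow> nat \<Rightarrow> 'v" where
  "walk G w 0 = w"
| "walk G w (Suc n) = (case chs G (walk G w n) of None \<Rightarrow> walk G w n | Some e \<Rightarrow> head G e)"

lemma chs_Some: "chs G v = Some e \<Longrightarrow> e \<in> arcs G \<and> tail G e = v"
  unfolding chs_def by (auto split: if_splits intro: someI2_ex)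

lemma chs_None: "chs G v = None \<Longrightarrow> sinkv G v"
  unfolding chs_def sinkv_def by (auto split: if_splits)

lemma ex_valid:
  assumes wf: "wf_digraph G" and w: "w \<in> verts G"
  shows "\<exists>p. valid G (w, p)"
proof -
  let ?p = "\<lambda>n. chs G (walk G w n)"
  have A: "\<forall>n e. ?p n = Some e \<longrightarrow> e \<in> arcs G \<and> (?p (Suc n) = None \<longrightarrow> sinkv G (head G e))
            \<and> (\<forall>e'. ?p (Suc n) = Some e' \<longrightarrow> tail G e' = head G e)"
    using chs_Some chs_None by fastforce
  have "valid G (w, ?p)" unfolding valid_def using w A chs_Some[of G w] chs_None[of G w] by auto
  thus ?thesis by blast
qed

lemma Z_nonempty:
  assumes wf: "wf_digraph G" and pa: "is_path G a"
  shows "\<exists>x. Z G a x"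
proof -
  obtain v es where a: "a = (v, es)" by (cases a)
  have pa': "v \<in> verts G" "set es \<subseteq> arcs G" "es \<noteq> [] \<Longrightarrow> tail G (hd es) = v" "epath G es"
    using pa is_path_epath[OF pa] a unfolding is_path_def by auto
  show ?thesis
  proof (cases "es = []")
    case True
    obtain p where "valid G (v, p)" using ex_valid[OF wf pa'(1)] by blast
    thus ?thesis using True a by (auto simp: Z_def)
  next
    case False
    have "last es \<in> arcs G" using False pa'(2) by auto
    hence "head G (last es) \<in> verts G" using wf_digraph.head_in_verts[OF wf] by blast
    then obtain p where "valid G (head G (last es), p)" using ex_valid[OF wf] by blast
    hence "valid G (v, prep es p)" using valid_prep[OF wf False pa'(2,4)] pa'(3)[OF False] by simp
    thus ?thesis using a by (auto simp: Z_def)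
  qed
qed

lemma Z_mono: "Z G b x \<Longrightarrow> fst a = fst b \<Longrightarrow> pfx (snd a) (snd b) \<Longrightarrow> Z G a x"
proof -
  assume z: "Z G b x" and f: "fst a = fst b" and pf: "pfx (snd a) (snd b)"
  obtain zs where zs: "snd b = snd a @ zs" using pf by (auto simp: pfx_def)
  let ?r = "prep zs (shn (length (snd b)) (snd x))"
  have "snd x = prep (snd a) ?r" using z zs by (simp add: Z_def prep_append)
  hence "prep (snd a) (shn (length (snd a)) (snd x)) = snd x" by (metis shn_prep)
  thus ?thesis using z f by (simp add: Z_def)
qed

lemma one_interp:
  fixes G :: "('v,'e) pre_digraph"
  assumes fin: "fin_digraph G" and v: "valid G x"
  shows "interp G (one_tm G :: ('v,'e,'r::comm_ring_1) lterm) \<phi> x = \<phi> x"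
proof -
  have "finite (verts G)" using fin by (simp add: fin_digraph.finite_verts)
  hence ex: "\<exists>vs. set vs = verts G \<and> distinct vs" using finite_distinct_list by blast
  define vs where "vs = (SOME vs. set vs = verts G \<and> distinct vs)"
  have vs: "set vs = verts G" "distinct vs" using someI_ex[OF ex] unfolding vs_def by auto
  have fx: "fst x \<in> verts G" using v by (simp add: valid_def)
  have "interp G (one_tm G :: ('v,'e,'r) lterm) \<phi> x = sum_list (map (\<lambda>w. interp G (Gen (V w) :: ('v,'e,'r) lterm) \<phi> x) vs)"
    unfolding one_tm_def vs_def[symmetric] interp_tsum by (simp only: map_map o_def)
  also have "\<dots> = (\<Sum>w\<in>set vs. interp G (Gen (V w) :: ('v,'e,'r) lterm) \<phi> x)"
    by (rule sum_list_distinct_conv_sum_set[OF vs(2)])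
  also have "\<dots> = (\<Sum>w\<in>verts G. interp G (Gen (V w) :: ('v,'e,'r) lterm) \<phi> x)"
    unfolding vs(1) ..
  also have "\<dots> = (\<Sum>w\<in>verts G. if w = fst x then \<phi> x else 0)"
    using v by (intro sum.cong) auto
  also have "\<dots> = \<phi> x" using fx \<open>finite (verts G)\<close> by (simp add: sum.delta')
  finally show ?thesis .
qed

lemma count_sum: "sum_list (map (\<lambda>k. if P k then (1::'r::comm_ring_1) else 0) [0..<n]) = of_nat (length (filter P [0..<n]))"
  by (induction n) auto

lemma two_ne_one:
  assumes "i \<noteq> j" "i < n" "j < n" "P i" "P j"
  shows "sum_list (map (\<lambda>k. if P k then (1::'r::{comm_ring_1,ring_char_0}) else 0) [0..<n]) \<noteq> 1"
proof -
  have "{i, j} \<subseteq> set (filter P [0..<n])" using assms by auto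
  hence "card {i,j} \<le> card (set (filter P [0..<n]))" by (intro card_mono) auto
  hence "2 \<le> length (filter P [0..<n])" using assms(1) distinct_card[of "filter P [0..<n]"] by simp
  thus ?thesis unfolding count_sum by (metis of_nat_eq_1_iff numeral_le_one_iff semiring_norm(69))
qed



theorem lemma4p1:
  fixes G :: "('v,'e) pre_digraph"
    and \<alpha> :: "nat \<Rightarrow> 'v \<times> 'e list"
    and n :: nat
  assumes "fin_digraph G"
    and "\<forall>i<n. is_path G (\<alpha> i)"
    and "leq G (tsum (map (\<lambda>i. Mul (path_tm (\<alpha> i)) (ghost_tm (\<alpha> i))) [0..<n]))
               (one_tm G :: ('v,'e,'r::{comm_ring_1, ring_char_0}) lterm)"
  shows "\<forall>i<n. \<forall>j<n. i \<noteq> j \<longrightarrow>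
           leq G (Mul (ghost_tm (\<alpha> i)) (path_tm (\<alpha> j)) :: ('v,'e,'r) lterm) Zero"
proof (intro allI impI)
  have wf: "wf_digraph G" using assms(1) unfolding fin_digraph_def by simp
  have eq: "interp G (tsum (map (\<lambda>i. Mul (path_tm (\<alpha> i)) (ghost_tm (\<alpha> i))) [0..<n]) :: ('v,'e,'r) lterm)
      = interp G (one_tm G :: ('v,'e,'r) lterm)"
    by (rule sound[OF wf assms(3)])
  have cnt: "sum_list (map (\<lambda>k. if Z G (\<alpha> k) x then (1::'r) else 0) [0..<n]) = 1" if vx: "valid G x" for x
  proof -
    have "sum_list (map (\<lambda>k. if Z G (\<alpha> k) x then (1::'r) else 0) [0..<n])
        = sum_list (map (\<lambda>k. interp G (Mul (path_tm (\<alpha> k)) (ghost_tm (\<alpha> k)) :: ('v,'e,'r) lterm) (\<lambda>_. 1) x) [0..<n])"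
    proof (intro arg_cong[where f=sum_list] map_cong HOL.refl)
      fix k assume "k \<in> set [0..<n]"
      hence "is_path G (\<alpha> k)" using assms(2) by simp
      from interp_proj[OF wf this, where \<phi>="\<lambda>_. (1::'r)" and x=x]
      show "(if Z G (\<alpha> k) x then (1::'r) else 0) =
         interp G (Mul (path_tm (\<alpha> k)) (ghost_tm (\<alpha> k)) :: ('v,'e,'r) lterm) (\<lambda>_. 1) x" by simp
    qed
    also have "\<dots> = interp G (tsum (map (\<lambda>i. Mul (path_tm (\<alpha> i)) (ghost_tm (\<alpha> i))) [0..<n]) :: ('v,'e,'r) lterm) (\<lambda>_. 1) x"
      unfolding interp_tsum by (simp only: map_map o_def)
    also have "\<dots> = 1" unfolding eq using one_interp[OF assms(1) vx, where \<phi>="\<lambda>_. (1::'r)"] by simp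
    finally show ?thesis .
  qed
  have nc: "\<not> pcomp (\<alpha> i) (\<alpha> j)" if ij: "i < n" "j < n" "i \<noteq> j" for i j
  proof
    assume c: "pcomp (\<alpha> i) (\<alpha> j)"
    have gen: False if ab: "a < n" "b < n" "a \<noteq> b" "fst (\<alpha> a) = fst (\<alpha> b)" "pfx (snd (\<alpha> a)) (snd (\<alpha> b))" for a b
    proof -
      obtain x where zb: "Z G (\<alpha> b) x" using Z_nonempty[OF wf] assms(2) ab(2) by blast
      have za: "Z G (\<alpha> a) x" using Z_mono[OF zb ab(4,5)] .
      have vx: "valid G x" using zb by (simp add: Z_def)
      have "sum_list (map (\<lambda>k. if Z G (\<alpha> k) x then (1::'r) else 0) [0..<n]) \<noteq> 1"
        by (rule two_ne_one[OF ab(3,1,2)]) (use za zb in auto)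
      thus False using cnt[OF vx] by simp
    qed
    show False using c ij gen[of i j] gen[of j i] by (auto simp: pcomp_def)
  qed
  fix i j assume "i < n" "j < n" "i \<noteq> j"
  thus "leq G (Mul (ghost_tm (\<alpha> i)) (path_tm (\<alpha> j)) :: ('v,'e,'r) lterm) Zero"
    using incomp_zero[OF wf] assms(2) nc by blast
qed

end
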